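(* Let $X$ be a random variable with survival function $\overline{F}(x) = \mathbb{P}(X>x)$ given by $\overline{F}(x) = 1$ for $x < 2$ and $\overline{F}(x) = 2^{-\lfloor \log_2 x \rfloor}$ for $x \geq 2$ (i.e. $\mathbb{P}(X = 2^m) = 2^{-m}$ for $m \in \mathbb{N} = \{1,2,\dots\}$, the St. Petersburg lottery). For $n \geq 2$ let $X_1, \dots, X_n$ be i.i.d. copies of $X$ and $\overline{X}_n = \frac{1}{n}\sum_{i=1}^n X_i$. Then $X \leq_{\mathrm{st}} \overline{X}_n$ for all $n \in \{2^k : k \in \mathbb{N}\}$.
   Context: For random variables $X, Y$, $X \leq_{\mathrm{st}} Y$ means $\mathbb{P}(X > x) \leq \mathbb{P}(Y > x)$ for all $x \in \mathbb{R}$. *)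

theory Defs
  imports "HOL-Probability.Probability"
begin

definition stpete_surv :: "real \<Rightarrow> real" where
  "stpete_surv x = (if x < 2 then 1 else 2 powr (- real_of_int \<lfloor>log 2 x\<rfloor>))"

definition stoch_le :: "'a measure \<Rightarrow> ('a \<Rightarrow> real) \<Rightarrow> ('a \<Rightarrow> real) \<Rightarrow> bool" where
  "stoch_le M X Y \<longleftrightarrow>
     (\<forall>x::real. measure M {\<omega> \<in> space M. X \<omega> > x} \<le> measure M {\<omega> \<in> space M. Y \<omega> > x})"

end

theory Submission
  imports Defs
begin


lemma surv_dy:
  fixes m :: nat and x :: real
  assumes "m \<ge> 1" "2^m \<le> x" "x < 2^(m+1)"
  shows "stpete_surv x = 1 / 2^m"
proof -
  have x2: "x \<ge> 2" using assms(1,2)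
  proof -
    have "(2::real)^1 \<le> 2^m" using assms(1) by (intro power_increasing) auto
    then show ?thesis using assms(2) by simp
  qed
  have "\<lfloor>log 2 x\<rfloor> = int m"
  proof -
    have e1: "2 powr (real m) = (2::real)^m" by (simp add: powr_realpow)
    have e2: "2 powr (real m + 1) = (2::real)^(m+1)" 
    proof -
      have "2 powr (real m + 1) = 2 powr (real (m+1))" by (simp add: add.commute)
      also have "\<dots> = (2::real)^(m+1)" by (rule powr_realpow) simp
      finally show ?thesis .
    qed
    show ?thesis using assms x2 e1 e2 by (subst floor_log_eq_powr_iff) auto
  qed
  then show ?thesis using x2 by (simp add: stpete_surv_def powr_minus powr_realpow divide_inverse)
qed

lemma exists_dy:
  fixes x :: real
  assumes "x \<ge> 2"
  shows "\<exists>m::nat. m \<ge> 1 \<and> 2^m \<le> x \<and> x < 2^(m+1)"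
proof -
  define m where "m = nat \<lfloor>log 2 x\<rfloor>"
  have "log 2 x \<ge> log 2 2" using assms by (subst log_le_cancel_iff) auto
  then have "log 2 x \<ge> 1" by simp
  then have fl: "\<lfloor>log 2 x\<rfloor> \<ge> 1" by linarith
  then have "\<lfloor>log 2 x\<rfloor> = int m" by (simp add: m_def)
  then have "2 powr (real m) \<le> x \<and> x < 2 powr (real m + 1)"
    using assms by (subst (asm) floor_log_eq_powr_iff) auto
  then have "2^m \<le> x \<and> x < 2^(m+1)" by (simp add: powr_add powr_realpow)
  moreover have "m \<ge> 1" using nat_mono[OF fl] m_def by simp
  ultimately show ?thesis by blast
qed

definition phi :: "real \<Rightarrow> real \<Rightarrow> real" where
  "phi a b = (if a = b then a else min ((a+b)/2) (max a b / 2))"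

lemma phi_le: "phi a b \<le> (a + b) / 2"
  unfolding phi_def using min.cobounded1[of "(a+b)/2" "max a b / 2"] by auto

lemma phi_lt:
  fixes a b :: nat
  assumes "a < b"
  shows "phi (2^a) (2^b) = 2^(b - 1)" "phi (2^b) (2^a) = 2^(b - 1)"
proof -
  have lt: "(2::real)^a < 2^b" using assms by simp
  have eq: "(2::real)^b = 2 * 2^(b-1)" using assms by (metis Suc_pred' not_less0 gr0I power_Suc)
  have pos: "(0::real) < 2^a" by simp
  have m1: "max ((2::real)^a) (2^b) = 2^b" "max ((2::real)^b) (2^a) = 2^b" using lt by auto
  have l2: "(2::real)^b/2 \<le> ((2::real)^a+2^b)/2" "(2::real)^b/2 \<le> ((2::real)^b+2^a)/2" using pos by simp_all
  have m2: "min (((2::real)^a + 2^b)/2) (2^b/2) = 2^b/2" by (rule min_absorb2[OF l2(1)])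
  have m3: "min (((2::real)^b + 2^a)/2) (2^b/2) = 2^b/2" by (rule min_absorb2[OF l2(2)])
  have ne: "(2::real)^a \<noteq> 2^b" "(2::real)^b \<noteq> 2^a" using lt by auto
  show "phi (2^a) (2^b) = 2^(b - 1)" unfolding phi_def using ne m1 m2 eq by simp
  show "phi (2^b) (2^a) = 2^(b - 1)" unfolding phi_def using ne m1 m3 eq by simp
qed

lemma phi_dy:
  fixes a b :: nat
  shows "phi (2^a) (2^b) = 2^(if a = b then a else max a b - 1)"
proof -
  consider "a = b" | "a < b" | "b < a" by arith
  then show ?thesis
  proof cases
    case 1 then show ?thesis by (simp add: phi_def)
  next
    case 2 then show ?thesis using phi_lt(1)[OF 2] by (simp add: max_def)
  next
    case 3 then show ?thesis using phi_lt(2)[OF 3] by (simp add: max_def)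
  qed
qed

fun Phi :: "nat \<Rightarrow> nat \<Rightarrow> (nat \<Rightarrow> real) \<Rightarrow> real" where
  "Phi 0 s f = f s"
| "Phi (Suc k) s f = phi (Phi k s f) (Phi k (s + 2^k) f)"

lemma Phi_le: "Phi k s f \<le> (\<Sum>i\<in>{s..<s+2^k}. f i) / 2^k"
proof (induction k arbitrary: s)
  case 0 then show ?case by simp
next
  case (Suc k)
  have split: "{s..<s+2^Suc k} = {s..<s+2^k} \<union> {s+2^k..<s+2^k+2^k}" by auto
  have "(\<Sum>i\<in>{s..<s+2^Suc k}. f i) = (\<Sum>i\<in>{s..<s+2^k}. f i) + (\<Sum>i\<in>{s+2^k..<s+2^k+2^k}. f i)"
    unfolding split by (rule sum.union_disjoint) auto
  moreover have "(2::real)^k * (2 * phi (Phi k s f) (Phi k (s + 2^k) f)) \<le> 2^k * (Phi k s f + Phi k (s + 2^k) f)"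
    using phi_le[of "Phi k s f" "Phi k (s + 2^k) f"] by (intro mult_left_mono) auto
  ultimately show ?case using Suc.IH[of s] Suc.IH[of "s+2^k"]
    by (simp add: field_simps)
qed




definition SP :: "'a measure \<Rightarrow> ('a \<Rightarrow> real) \<Rightarrow> bool" where
  "SP M Y \<longleftrightarrow> Y \<in> borel_measurable M \<and> (\<forall>x. measure M {\<omega>\<in>space M. Y \<omega> > x} = stpete_surv x)"

lemma phi_meas[measurable]:
  assumes [measurable]: "f \<in> borel_measurable N" "g \<in> borel_measurable N"
  shows "(\<lambda>x. phi (f x) (g x)) \<in> borel_measurable N"
  unfolding phi_def by measurable

lemma pow_pred: "j \<ge> 1 \<Longrightarrow> (2::real)^j = 2 * 2^(j-1)"
  by (cases j) auto

context prob_space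
begin

lemma SP_ge:
  assumes "SP M Y" "j \<ge> 1"
  shows "prob {\<omega>\<in>space M. Y \<omega> \<ge> 2^j} = 1 / 2^(j-1)"
proof -
  have Ym[measurable]: "Y \<in> borel_measurable M" using assms(1) by (simp add: SP_def)
  define A where "A n = {\<omega>\<in>space M. Y \<omega> > 2^j - 1 / real (Suc n)}" for n
  have rA: "range A \<subseteq> sets M" unfolding A_def by auto
  have dA: "decseq A"
  proof (rule decseq_SucI)
    fix n
    have "1 / real (Suc (Suc n)) \<le> 1 / real (Suc n)" by (intro divide_left_mono) auto
    then show "A (Suc n) \<subseteq> A n" unfolding A_def by auto
  qed
  have IA: "(\<Inter>n. A n) = {\<omega>\<in>space M. Y \<omega> \<ge> 2^j}"
  proof (intro set_eqI iffI)
    fix \<omega> assume w: "\<omega> \<in> (\<Inter>n. A n)"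
    then have sp: "\<omega> \<in> space M" by (auto simp: A_def)
    show "\<omega> \<in> {\<omega>\<in>space M. Y \<omega> \<ge> 2^j}"
    proof (rule ccontr)
      assume "\<omega> \<notin> {\<omega>\<in>space M. Y \<omega> \<ge> 2^j}"
      then have "Y \<omega> < 2^j" using sp by auto
      then obtain n where n: "inverse (real (Suc n)) < 2^j - Y \<omega>"
        using reals_Archimedean[of "2^j - Y \<omega>"] by auto
      moreover have "\<omega> \<in> A n" using w by auto
      ultimately show False by (simp add: A_def inverse_eq_divide)
    qed
  next
    fix \<omega> assume "\<omega> \<in> {\<omega>\<in>space M. Y \<omega> \<ge> 2^j}"
    moreover have "1 / real (Suc n) > 0" for n by simp
    ultimately show "\<omega> \<in> (\<Inter>n. A n)" unfolding A_def by (smt (verit) INT_I mem_Collect_eq)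
  qed
  have mA: "prob (A n) = 1 / 2^(j-1)" for n
  proof -
    have "prob (A n) = stpete_surv (2^j - 1 / real (Suc n))"
      using assms(1) unfolding A_def SP_def by auto
    also have "\<dots> = 1 / 2^(j-1)"
    proof (cases "j = 1")
      case True
      have "1 / real (Suc n) > 0" by simp
      then show ?thesis using True by (simp add: stpete_surv_def)
    next
      case False
      then have j2: "j - 1 \<ge> 1" using assms(2) by simp
      have pj: "(2::real)^j = 2 * 2^(j-1)" using assms(2) by (rule pow_pred)
      have "(1::real) \<le> 2^(j-1)" by simp
      moreover have "1 / real (Suc n) \<le> 1" by simp
      moreover have "1 / real (Suc n) > 0" by simp
      ultimately have "2^(j-1) \<le> (2::real)^j - 1 / real (Suc n)" "(2::real)^j - 1 / real (Suc n) < 2^(j-1+1)"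
        using pj j2 by (simp_all only: power_add power_one_right mult.commute[of _ 2])
      then show ?thesis using surv_dy[OF j2] by simp
    qed
    finally show ?thesis .
  qed
  have "(\<lambda>n. prob (A n)) \<longlonglongrightarrow> prob (\<Inter>n. A n)" by (rule finite_Lim_measure_decseq[OF rA dA])
  then have "(\<lambda>n. 1 / 2^(j-1) :: real) \<longlonglongrightarrow> prob (\<Inter>n. A n)" using mA by simp
  then have "prob (\<Inter>n. A n) = 1 / 2^(j-1)" using LIMSEQ_unique tendsto_const by blast
  then show ?thesis using IA by simp
qed

lemma SP_gt:
  assumes "SP M Y" "j \<ge> 1"
  shows "prob {\<omega>\<in>space M. Y \<omega> > 2^j} = 1 / 2^j"
proof -
  have "(2::real)^j < 2^(j+1)" by simp
  then have "stpete_surv (2^j) = 1/2^j" using surv_dy[of j "2^j"] assms(2) by simp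
  then show ?thesis using assms(1) by (simp add: SP_def)
qed

lemma SP_eq:
  assumes "SP M Y" "j \<ge> 1"
  shows "prob {\<omega>\<in>space M. Y \<omega> = 2^j} = 1 / 2^j"
proof -
  have Ym[measurable]: "Y \<in> borel_measurable M" using assms(1) by (simp add: SP_def)
  have e: "{\<omega>\<in>space M. Y \<omega> = 2^j} = {\<omega>\<in>space M. Y \<omega> \<ge> 2^j} - {\<omega>\<in>space M. Y \<omega> > 2^j}" by auto
  have "prob ({\<omega>\<in>space M. Y \<omega> \<ge> 2^j} - {\<omega>\<in>space M. Y \<omega> > 2^j}) = prob {\<omega>\<in>space M. Y \<omega> \<ge> 2^j} - prob {\<omega>\<in>space M. Y \<omega> > 2^j}"
    by (rule finite_measure_Diff) auto
  then have "prob {\<omega>\<in>space M. Y \<omega> = 2^j} = prob {\<omega>\<in>space M. Y \<omega> \<ge> 2^j} - prob {\<omega>\<in>space M. Y \<omega> > 2^j}"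
    by (simp only: e)
  also have "\<dots> = 1 / 2^(j-1) - 1/2^j" using SP_ge[OF assms] SP_gt[OF assms] by simp
  also have "\<dots> = 1 / 2^j"
  proof -
    have "(2::real)^j = 2 * 2^(j-1)" using assms(2) by (rule pow_pred)
    then show ?thesis by (simp add: field_simps)
  qed
  finally show ?thesis .
qed

lemma SP_AE:
  assumes "SP M Y"
  shows "AE \<omega> in M. \<exists>j::nat. j \<ge> 1 \<and> Y \<omega> = 2^j"
proof -
  have Ym[measurable]: "Y \<in> borel_measurable M" using assms(1) by (simp add: SP_def)
  define N0 where "N0 = {\<omega>\<in>space M. Y \<omega> < 2}"
  define N1 where "N1 j = {\<omega>\<in>space M. 2^Suc j < Y \<omega> \<and> Y \<omega> < 2^(Suc j + 1)}" for j :: nat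
  have s0[measurable]: "N0 \<in> sets M" unfolding N0_def by measurable
  have s1[measurable]: "N1 j \<in> sets M" for j unfolding N1_def by measurable
  have "prob N0 = 0"
  proof -
    have "N0 = space M - {\<omega>\<in>space M. Y \<omega> \<ge> 2^1}" unfolding N0_def by auto
    then have "prob N0 = 1 - prob {\<omega>\<in>space M. Y \<omega> \<ge> 2^1}" by (simp add: prob_compl)
    then show ?thesis using SP_ge[OF assms, of 1] by simp
  qed
  then have n0: "N0 \<in> null_sets M" by (simp add: null_setsI emeasure_eq_measure)
  have "prob (N1 j) = 0" for j
  proof -
    have e: "N1 j = {\<omega>\<in>space M. Y \<omega> > 2^Suc j} - {\<omega>\<in>space M. Y \<omega> \<ge> 2^(Suc j + 1)}" unfolding N1_def by auto
    have "prob ({\<omega>\<in>space M. Y \<omega> > 2^Suc j} - {\<omega>\<in>space M. Y \<omega> \<ge> 2^(Suc j + 1)}) = prob {\<omega>\<in>space M. Y \<omega> > 2^Suc j} - prob {\<omega>\<in>space M. Y \<omega> \<ge> 2^(Suc j + 1)}"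
    proof (rule finite_measure_Diff)
      show "{\<omega>\<in>space M. Y \<omega> \<ge> 2^(Suc j + 1)} \<subseteq> {\<omega>\<in>space M. Y \<omega> > 2^Suc j}"
      proof safe
        fix \<omega> assume "\<omega> \<in> space M" "(2::real)^(Suc j + 1) \<le> Y \<omega>"
        moreover have "(2::real)^Suc j < 2^(Suc j + 1)" by simp
        ultimately show "2^Suc j < Y \<omega>" by linarith
      qed
    qed auto
    then have "prob (N1 j) = prob {\<omega>\<in>space M. Y \<omega> > 2^Suc j} - prob {\<omega>\<in>space M. Y \<omega> \<ge> 2^(Suc j + 1)}"
      by (simp only: e)
    then show ?thesis using SP_ge[OF assms, of "Suc j + 1"] SP_gt[OF assms, of "Suc j"] by simp
  qed
  then have n1: "N1 j \<in> null_sets M" for j by (simp add: null_setsI emeasure_eq_measure)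
  have nn: "N0 \<union> (\<Union>j. N1 j) \<in> null_sets M" using n0 n1 by (intro null_sets.Un null_sets_UN) auto
  show ?thesis
  proof (rule AE_I'[OF nn])
    show "{\<omega>\<in>space M. \<not> (\<exists>j::nat. j \<ge> 1 \<and> Y \<omega> = 2^j)} \<subseteq> N0 \<union> (\<Union>j. N1 j)"
    proof
      fix \<omega> assume "\<omega> \<in> {\<omega>\<in>space M. \<not> (\<exists>j::nat. j \<ge> 1 \<and> Y \<omega> = 2^j)}"
      then have sp: "\<omega> \<in> space M" and nx: "\<nexists>j::nat. 1 \<le> j \<and> Y \<omega> = 2 ^ j" by auto
      show "\<omega> \<in> N0 \<union> (\<Union>j. N1 j)"
      proof (cases "\<omega> \<in> N0")
        case False
        then have "Y \<omega> \<ge> 2" using sp unfolding N0_def by auto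
        then obtain m :: nat where m: "m \<ge> 1" "2^m \<le> Y \<omega>" "Y \<omega> < 2^(m+1)" using exists_dy by blast
        then have "2^m < Y \<omega>" using nx by force
        then have "\<omega> \<in> N1 (m - 1)" using m sp unfolding N1_def by simp
        then show ?thesis by blast
      qed simp
    qed
  qed
qed

end



lemma pow_gt_iff:
  fixes c m :: nat and x :: real
  assumes "2^m \<le> x" "x < 2^(m+1)"
  shows "(2::real)^c > x \<longleftrightarrow> c \<ge> m + 1"
proof
  assume h: "(2::real)^c > x"
  show "c \<ge> m + 1"
  proof (rule ccontr)
    assume "\<not> c \<ge> m + 1"
    then have "(2::real)^c \<le> 2^m" by (intro power_increasing) auto
    then show False using h assms by linarith
  qed
next
  assume "c \<ge> m + 1"
  then have "(2::real)^(m+1) \<le> 2^c" by (intro power_increasing) auto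
  then show "(2::real)^c > x" using assms by linarith
qed

lemma key_pw:
  fixes a b m :: nat and x :: real
  assumes "2^m \<le> x" "x < 2^(m+1)"
  shows "phi (2^a) (2^b) > x \<longleftrightarrow>
     ((2::real)^(m+2) \<le> 2^a \<or> (2::real)^(m+2) \<le> 2^b \<or> ((2::real)^a = 2^(m+1) \<and> (2::real)^b = 2^(m+1)))"
proof -
  have "phi (2^a) (2^b) > x \<longleftrightarrow> (if a = b then a else max a b - 1) \<ge> m + 1"
    unfolding phi_dy by (rule pow_gt_iff[OF assms])
  also have "\<dots> \<longleftrightarrow> (m+2 \<le> a \<or> m+2 \<le> b \<or> (a = m+1 \<and> b = m+1))" by auto
  also have "\<dots> \<longleftrightarrow> ((2::real)^(m+2) \<le> 2^a \<or> (2::real)^(m+2) \<le> 2^b \<or> ((2::real)^a = 2^(m+1) \<and> (2::real)^b = 2^(m+1)))"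
    by (simp only: power_increasing_iff power_inject_exp)
  finally show ?thesis .
qed

lemma phi_ge2:
  fixes a b :: nat
  assumes "a \<ge> 1" "b \<ge> 1"
  shows "phi (2^a) (2^b) \<ge> 2"
proof -
  have c: "(if a = b then a else max a b - 1) \<ge> 1" using assms by auto
  have "(2::real)^1 \<le> 2^(if a = b then a else max a b - 1)" by (rule power_increasing[OF c]) simp
  then show ?thesis unfolding phi_dy by simp
qed

lemma Phi_cong: "(\<And>i. i \<in> {s..<s+2^k} \<Longrightarrow> f i = g i) \<Longrightarrow> Phi k s f = Phi k s g"
proof (induction k arbitrary: s)
  case 0 then show ?case by simp
next
  case (Suc k)
  have "Phi k s f = Phi k s g" by (rule Suc.IH) (use Suc.prems in auto)
  moreover have "Phi k (s+2^k) f = Phi k (s+2^k) g" by (rule Suc.IH) (use Suc.prems in auto)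
  ultimately show ?case by simp
qed

lemma Phi_meas: "{s..<s+2^k} \<subseteq> K \<Longrightarrow> (\<lambda>v. Phi k s v) \<in> borel_measurable (PiM K (\<lambda>_. borel))"
proof (induction k arbitrary: s)
  case 0
  then have "s \<in> K" by auto
  then show ?case by (simp add: measurable_component_singleton)
next
  case (Suc k)
  have m1: "(\<lambda>v. Phi k s v) \<in> borel_measurable (PiM K (\<lambda>_. borel))" by (rule Suc.IH) (use Suc.prems in auto)
  have m2: "(\<lambda>v. Phi k (s+2^k) v) \<in> borel_measurable (PiM K (\<lambda>_. borel))" by (rule Suc.IH) (use Suc.prems in auto)
  show ?case using phi_meas[OF m1 m2] by simp
qed

context prob_space
begin

lemma SP_phi:
  assumes A: "SP M A" and B: "SP M B"
    and ind: "\<And>S T. S \<in> sets borel \<Longrightarrow> T \<in> sets borel \<Longrightarrow>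
      prob ({\<omega>\<in>space M. A \<omega> \<in> S} \<inter> {\<omega>\<in>space M. B \<omega> \<in> T}) = prob {\<omega>\<in>space M. A \<omega> \<in> S} * prob {\<omega>\<in>space M. B \<omega> \<in> T}"
  shows "SP M (\<lambda>\<omega>. phi (A \<omega>) (B \<omega>))"
proof -
  have Am[measurable]: "A \<in> borel_measurable M" using A by (simp add: SP_def)
  have Bm[measurable]: "B \<in> borel_measurable M" using B by (simp add: SP_def)
  have AEd: "AE \<omega> in M. (\<exists>a::nat. a \<ge> 1 \<and> A \<omega> = 2^a) \<and> (\<exists>b::nat. b \<ge> 1 \<and> B \<omega> = 2^b)"
    using SP_AE[OF A] SP_AE[OF B] by (rule eventually_conj)
  have "prob {\<omega>\<in>space M. phi (A \<omega>) (B \<omega>) > x} = stpete_surv x" for x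
  proof (cases "x < 2")
    case True
    have "AE \<omega> in M. \<omega> \<in> {\<omega>\<in>space M. phi (A \<omega>) (B \<omega>) > x}"
      using AEd AE_space
    proof eventually_elim
      case (elim \<omega>)
      then obtain a b :: nat where "a \<ge> 1" "b \<ge> 1" "A \<omega> = 2^a" "B \<omega> = 2^b" by auto
      then have "phi (A \<omega>) (B \<omega>) \<ge> 2" using phi_ge2 by simp
      then show ?case using elim True by auto
    qed
    then have "prob {\<omega>\<in>space M. phi (A \<omega>) (B \<omega>) > x} = 1" by (subst prob_eq_1) auto
    then show ?thesis using True by (simp add: stpete_surv_def)
  next
    case False
    then have "x \<ge> 2" by simp
    then obtain m :: nat where m: "m \<ge> 1" "2^m \<le> x" "x < 2^(m+1)" using exists_dy by blast
    define E1a where "E1a = {\<omega>\<in>space M. A \<omega> \<in> {(2::real)^(m+2)..}}"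
    define E1b where "E1b = {\<omega>\<in>space M. B \<omega> \<in> {(2::real)^(m+2)..}}"
    define E2a where "E2a = {\<omega>\<in>space M. A \<omega> \<in> {(2::real)^(m+1)}}"
    define E2b where "E2b = {\<omega>\<in>space M. B \<omega> \<in> {(2::real)^(m+1)}}"
    have [measurable]: "E1a \<in> sets M" "E1b \<in> sets M" "E2a \<in> sets M" "E2b \<in> sets M"
      unfolding E1a_def E1b_def E2a_def E2b_def by measurable
    have p1a: "prob E1a = 1 / 2^(m+1)" using SP_ge[OF A, of "m+2"] unfolding E1a_def by simp
    have p1b: "prob E1b = 1 / 2^(m+1)" using SP_ge[OF B, of "m+2"] unfolding E1b_def by simp
    have p2a: "prob E2a = 1 / 2^(m+1)" using SP_eq[OF A, of "m+1"] unfolding E2a_def by simp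
    have p2b: "prob E2b = 1 / 2^(m+1)" using SP_eq[OF B, of "m+1"] unfolding E2b_def by simp
    have i1: "prob (E1a \<inter> E1b) = prob E1a * prob E1b" unfolding E1a_def E1b_def by (rule ind) auto
    have i2: "prob (E2a \<inter> E2b) = prob E2a * prob E2b" unfolding E2a_def E2b_def by (rule ind) auto
    have "prob {\<omega>\<in>space M. phi (A \<omega>) (B \<omega>) > x} = prob ((E1a \<union> E1b) \<union> (E2a \<inter> E2b))"
    proof (rule finite_measure_eq_AE)
      show "AE \<omega> in M. (\<omega> \<in> {\<omega>\<in>space M. phi (A \<omega>) (B \<omega>) > x}) = (\<omega> \<in> (E1a \<union> E1b) \<union> (E2a \<inter> E2b))"
        using AEd AE_space
      proof eventually_elim
        case (elim \<omega>)
        then obtain a b :: nat where ab: "A \<omega> = 2^a" "B \<omega> = 2^b" by auto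
        have sp: "\<omega> \<in> space M" using elim by simp
        have r1: "(\<omega> \<in> (E1a \<union> E1b) \<union> (E2a \<inter> E2b)) \<longleftrightarrow>
          ((2::real)^(m+2) \<le> A \<omega> \<or> (2::real)^(m+2) \<le> B \<omega> \<or> (A \<omega> = 2^(m+1) \<and> B \<omega> = 2^(m+1)))"
          using sp unfolding E1a_def E1b_def E2a_def E2b_def by auto
        have r2: "(\<omega> \<in> {\<omega>\<in>space M. phi (A \<omega>) (B \<omega>) > x}) \<longleftrightarrow> phi (A \<omega>) (B \<omega>) > x"
          using sp by simp
        show ?case unfolding r1 r2 ab by (rule key_pw[OF m(2,3)])
      qed
    qed auto
    also have "\<dots> = prob (E1a \<union> E1b) + prob (E2a \<inter> E2b)"
    proof (rule finite_measure_Union)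
      have "(2::real)^(m+1) < 2^(m+2)" by simp
      then show "(E1a \<union> E1b) \<inter> (E2a \<inter> E2b) = {}"
        unfolding E1a_def E1b_def E2a_def E2b_def by auto
    qed auto
    also have "prob (E1a \<union> E1b) = prob E1a + prob E1b - prob (E1a \<inter> E1b)"
      using finite_measure_Union'[of E1a E1b] finite_measure_Diff'[of E1b E1a]
      by (simp add: Int_commute)
    finally have "prob {\<omega>\<in>space M. phi (A \<omega>) (B \<omega>) > x} = 2 / 2^(m+1)"
      using i1 i2 p1a p1b p2a p2b by simp
    also have "\<dots> = 1 / 2^m" by simp
    also have "\<dots> = stpete_surv x" using surv_dy[OF m] by simp
    finally show ?thesis .
  qed
  then show ?thesis by (simp add: SP_def)
qed

lemma SP_Phi:
  "indep_vars (\<lambda>_. borel) Y {s..<s+2^k} \<Longrightarrow> (\<And>i. i \<in> {s..<s+2^k} \<Longrightarrow> SP M (Y i))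
    \<Longrightarrow> SP M (\<lambda>\<omega>. Phi k s (\<lambda>i. Y i \<omega>))"
proof (induction k arbitrary: s)
  case 0
  then have "SP M (Y s)" by simp
  then show ?case by simp
next
  case (Suc k)
  define K where "K b = (if b then {s..<s+2^k} else {s+2^k..<s+2^k+2^k})" for b :: bool
  define st where "st b = (if b then s else s+2^k)" for b :: bool
  have KI: "K b \<subseteq> {s..<s+2^Suc k}" for b unfolding K_def by auto
  have Kst: "K b = {st b..<st b + 2^k}" for b unfolding K_def st_def by auto
  have SA: "SP M (\<lambda>\<omega>. Phi k s (\<lambda>i. Y i \<omega>))"
    by (rule Suc.IH) (use Suc.prems KI[of True] in \<open>auto simp: K_def intro: indep_vars_subset\<close>)
  have SB: "SP M (\<lambda>\<omega>. Phi k (s+2^k) (\<lambda>i. Y i \<omega>))"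
    by (rule Suc.IH) (use Suc.prems KI[of False] in \<open>auto simp: K_def intro: indep_vars_subset\<close>)
  have dj: "disjoint_family_on K UNIV"
    unfolding disjoint_family_on_def K_def by auto
  have ir: "indep_vars (\<lambda>b. PiM (K b) (\<lambda>_. borel)) (\<lambda>b \<omega>. restrict (\<lambda>i. Y i \<omega>) (K b)) UNIV"
    by (rule indep_vars_restrict[OF Suc.prems(1) KI dj])
  have ic: "indep_vars (\<lambda>_. borel) (\<lambda>b \<omega>. Phi k (st b) (restrict (\<lambda>i. Y i \<omega>) (K b))) UNIV"
    by (rule indep_vars_compose2[OF ir]) (rule Phi_meas, simp add: Kst)
  have eqr: "Phi k (st b) (restrict (\<lambda>i. Y i \<omega>) (K b)) = Phi k (st b) (\<lambda>i. Y i \<omega>)" for b \<omega>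
    by (rule Phi_cong) (simp add: Kst)
  define Z where "Z b \<omega> = Phi k (st b) (\<lambda>i. Y i \<omega>)" for b \<omega>
  have iz: "indep_vars (\<lambda>_. borel) Z UNIV" using ic unfolding Z_def eqr .
  have ind: "prob ({\<omega>\<in>space M. Phi k s (\<lambda>i. Y i \<omega>) \<in> S} \<inter> {\<omega>\<in>space M. Phi k (s+2^k) (\<lambda>i. Y i \<omega>) \<in> T})
     = prob {\<omega>\<in>space M. Phi k s (\<lambda>i. Y i \<omega>) \<in> S} * prob {\<omega>\<in>space M. Phi k (s+2^k) (\<lambda>i. Y i \<omega>) \<in> T}"
    if "S \<in> sets borel" "T \<in> sets borel" for S T
  proof -
    define AA where "AA b = (if b then S else T)" for b
    have "prob (\<Inter>b\<in>UNIV. Z b -` AA b \<inter> space M) = (\<Prod>b\<in>UNIV. prob (Z b -` AA b \<inter> space M))"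
      by (rule indep_varsD[OF iz]) (auto simp: AA_def that)
    moreover have "(\<Inter>b\<in>UNIV. Z b -` AA b \<inter> space M) = {\<omega>\<in>space M. Phi k s (\<lambda>i. Y i \<omega>) \<in> S} \<inter> {\<omega>\<in>space M. Phi k (s+2^k) (\<lambda>i. Y i \<omega>) \<in> T}"
      by (auto simp: UNIV_bool Z_def AA_def st_def)
    moreover have "(\<Prod>b\<in>UNIV. prob (Z b -` AA b \<inter> space M)) = prob {\<omega>\<in>space M. Phi k s (\<lambda>i. Y i \<omega>) \<in> S} * prob {\<omega>\<in>space M. Phi k (s+2^k) (\<lambda>i. Y i \<omega>) \<in> T}"
      by (simp add: UNIV_bool Z_def AA_def st_def vimage_def Int_def conj_commute)
    ultimately show ?thesis by simp
  qed
  have "SP M (\<lambda>\<omega>. phi (Phi k s (\<lambda>i. Y i \<omega>)) (Phi k (s+2^k) (\<lambda>i. Y i \<omega>)))"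
    by (rule SP_phi[OF SA SB ind])
  then show ?case by simp
qed

end




theorem proposition3:
  fixes M :: "'a measure" and X :: "'a \<Rightarrow> real" and Xs :: "nat \<Rightarrow> 'a \<Rightarrow> real"
    and k :: nat
  assumes "prob_space M"
    and "X \<in> borel_measurable M"
    and "\<And>x. measure M {\<omega> \<in> space M. X \<omega> > x} = stpete_surv x"
    and "k \<ge> 1"
    and "\<And>i. i < 2 ^ k \<Longrightarrow> Xs i \<in> borel_measurable M"
    and "prob_space.indep_vars M (\<lambda>_. borel) Xs {..<2 ^ k}"
    and "\<And>i x. i < 2 ^ k \<Longrightarrow> measure M {\<omega> \<in> space M. Xs i \<omega> > x} = stpete_surv x"
  shows "stoch_le M X (\<lambda>\<omega>. (\<Sum>i<2 ^ k. Xs i \<omega>) / real (2 ^ k))"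
proof -
  interpret prob_space M by (rule assms(1))
  have iv: "indep_vars (\<lambda>_. borel) Xs {0..<0+2^k}" using assms(6) by (simp add: atLeast0LessThan)
  have sp: "SP M (Xs i)" if "i \<in> {0..<0+2^k}" for i
    using that assms(5,7) by (auto simp: SP_def)
  have SPhi: "SP M (\<lambda>\<omega>. Phi k 0 (\<lambda>i. Xs i \<omega>))" by (rule SP_Phi[OF iv sp])
  have avgm: "(\<lambda>\<omega>. (\<Sum>i<2 ^ k. Xs i \<omega>) / real (2 ^ k)) \<in> borel_measurable M"
    using assms(5) by (intro borel_measurable_divide borel_measurable_sum) auto
  show ?thesis unfolding stoch_le_def
  proof
    fix x :: real
    have "measure M {\<omega> \<in> space M. X \<omega> > x} = measure M {\<omega> \<in> space M. Phi k 0 (\<lambda>i. Xs i \<omega>) > x}"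
      using assms(3) SPhi by (simp add: SP_def)
    also have "\<dots> \<le> measure M {\<omega> \<in> space M. (\<Sum>i<2 ^ k. Xs i \<omega>) / real (2 ^ k) > x}"
    proof (rule finite_measure_mono)
      show "{\<omega> \<in> space M. Phi k 0 (\<lambda>i. Xs i \<omega>) > x} \<subseteq> {\<omega> \<in> space M. (\<Sum>i<2 ^ k. Xs i \<omega>) / real (2 ^ k) > x}"
      proof safe
        fix \<omega> assume "\<omega> \<in> space M" "x < Phi k 0 (\<lambda>i. Xs i \<omega>)"
        moreover have "Phi k 0 (\<lambda>i. Xs i \<omega>) \<le> (\<Sum>i<2 ^ k. Xs i \<omega>) / real (2 ^ k)"
          using Phi_le[of k 0 "\<lambda>i. Xs i \<omega>"] by (simp add: atLeast0LessThan)
        ultimately show "x < (\<Sum>i<2 ^ k. Xs i \<omega>) / real (2 ^ k)" by linarith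
      qed
      show "{\<omega> \<in> space M. (\<Sum>i<2 ^ k. Xs i \<omega>) / real (2 ^ k) > x} \<in> sets M"
        using avgm by measurable
    qed
    finally show "measure M {\<omega> \<in> space M. X \<omega> > x} \<le> measure M {\<omega> \<in> space M. (\<Sum>i<2 ^ k. Xs i \<omega>) / real (2 ^ k) > x}" .
  qed
qed


end
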